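(* Let $K$ be a convex body in $\mathbb{R}^d$ and let $x,x'$ be regular boundary points of $K$ with exterior normal unit vectors $\xi,\xi'$ respectively. If $\xi\neq\xi'$, then the sets $-S(K,-\xi)+x$ and $-S(K,-\xi')+x'$ are disjoint.
   Context: A convex body is a compact convex set with nonempty interior. A boundary point is regular if $K$ has a unique support hyperplane there; its exterior normal unit vector $\xi$ satisfies $K\subset\{z:\langle z,\xi\rangle\le\langle x,\xi\rangle\}$. For a unit vector $\eta$, $S(K,\eta)$ is the set of points of $K$ maximizing $\langle\cdot,\eta\rangle$. *)

theory Defs
  imports "HOL-Analysis.Analysis"
begin

definition convex_body :: "'a::euclidean_space set \<Rightarrow> bool" where
  "convex_body K \<longleftrightarrow> compact K \<and> convex K \<and> interior K \<noteq> {}"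

definition support_hyperplane_at :: "'a::euclidean_space set \<Rightarrow> 'a \<Rightarrow> 'a set \<Rightarrow> bool" where
  "support_hyperplane_at K x H \<longleftrightarrow> x \<in> K \<and>
     (\<exists>u. u \<noteq> 0 \<and> H = {z. z \<bullet> u = x \<bullet> u} \<and> K \<subseteq> {z. z \<bullet> u \<le> x \<bullet> u})"

definition regular_boundary_point :: "'a::euclidean_space set \<Rightarrow> 'a \<Rightarrow> bool" where
  "regular_boundary_point K x \<longleftrightarrow> x \<in> frontier K \<and> x \<in> K \<and> (\<exists>!H. support_hyperplane_at K x H)"

definition exterior_normal :: "'a::euclidean_space set \<Rightarrow> 'a \<Rightarrow> 'a \<Rightarrow> bool" where
  "exterior_normal K x \<xi> \<longleftrightarrow> norm \<xi> = 1 \<and> K \<subseteq> {z. z \<bullet> \<xi> \<le> x \<bullet> \<xi>}"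

definition support_set :: "'a::euclidean_space set \<Rightarrow> 'a \<Rightarrow> 'a set" where
  "support_set K \<eta> = {y \<in> K. \<forall>z\<in>K. z \<bullet> \<eta> \<le> y \<bullet> \<eta>}"

end

theory Submission
  imports Defs
begin

theorem lemma4p5:
  fixes K :: "'a::euclidean_space set" and x x' \<xi> \<xi>' :: 'a
  assumes "convex_body K"
    and "regular_boundary_point K x" and "regular_boundary_point K x'"
    and "exterior_normal K x \<xi>" and "exterior_normal K x' \<xi>'"
    and "\<xi> \<noteq> \<xi>'"
  shows "((\<lambda>y. - y + x) ` support_set K (- \<xi>)) \<inter> ((\<lambda>y. - y + x') ` support_set K (- \<xi>')) = {}"
proof (rule ccontr)
  assume "((\<lambda>y. - y + x) ` support_set K (- \<xi>)) \<inter> ((\<lambda>y. - y + x') ` support_set K (- \<xi>')) \<noteq> {}"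
  then obtain y y' where y: "y \<in> support_set K (- \<xi>)" and y': "y' \<in> support_set K (- \<xi>')"
    and eq: "- y + x = - y' + x'" by blast
  have xK: "x \<in> K" and x'K: "x' \<in> K" using assms(2,3) unfolding regular_boundary_point_def by auto
  have n1: "norm \<xi> = 1" and K1: "\<And>z. z \<in> K \<Longrightarrow> z \<bullet> \<xi> \<le> x \<bullet> \<xi>"
    using assms(4) unfolding exterior_normal_def by auto
  have n2: "norm \<xi>' = 1" and K2: "\<And>z. z \<in> K \<Longrightarrow> z \<bullet> \<xi>' \<le> x' \<bullet> \<xi>'"
    using assms(5) unfolding exterior_normal_def by auto
  have y'K: "y' \<in> K" using y' unfolding support_set_def by auto
  have ymin: "y \<bullet> \<xi> \<le> y' \<bullet> \<xi>" using y y'K unfolding support_set_def by auto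
  have x'eq: "x' = x - y + y'" using eq by (simp add: algebra_simps)
  have "x \<bullet> \<xi> \<le> x' \<bullet> \<xi>" using ymin unfolding x'eq by (simp add: inner_simps)
  hence K3: "\<And>z. z \<in> K \<Longrightarrow> z \<bullet> \<xi> \<le> x' \<bullet> \<xi>" using K1 by fastforce
  have xi0: "\<xi> \<noteq> 0" using n1 by auto
  have xi'0: "\<xi>' \<noteq> 0" using n2 by auto
  have s1: "support_hyperplane_at K x' {z. z \<bullet> \<xi> = x' \<bullet> \<xi>}"
    unfolding support_hyperplane_at_def using x'K xi0 K3 by blast
  have s2: "support_hyperplane_at K x' {z. z \<bullet> \<xi>' = x' \<bullet> \<xi>'}"
    unfolding support_hyperplane_at_def using x'K xi'0 K2 by blast
  have uniq: "\<exists>!H. support_hyperplane_at K x' H" using assms(3) unfolding regular_boundary_point_def by auto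
  have Heq: "{z. z \<bullet> \<xi> = x' \<bullet> \<xi>} = {z. z \<bullet> \<xi>' = x' \<bullet> \<xi>'}"
    using uniq s1 s2 by blast
  define c where "c = \<xi> \<bullet> \<xi>'"
  define v where "v = \<xi> - c *\<^sub>R \<xi>'"
  have sq1: "\<xi> \<bullet> \<xi> = 1" using n1 by (simp add: norm_eq_sqrt_inner)
  have sq2: "\<xi>' \<bullet> \<xi>' = 1" using n2 by (simp add: norm_eq_sqrt_inner)
  have "v \<bullet> \<xi>' = 0" unfolding v_def c_def using sq2 by (simp add: inner_simps)
  hence "x' + v \<in> {z. z \<bullet> \<xi>' = x' \<bullet> \<xi>'}" by (simp add: inner_simps)
  hence "x' + v \<in> {z. z \<bullet> \<xi> = x' \<bullet> \<xi>}" using Heq by simp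
  hence v0: "v \<bullet> \<xi> = 0" by (simp add: inner_simps)
  have vv: "v \<bullet> v = v \<bullet> \<xi> - c * (v \<bullet> \<xi>')" unfolding v_def by (simp add: inner_simps)
  have "v \<bullet> v = 0" using vv v0 \<open>v \<bullet> \<xi>' = 0\<close> by simp
  hence "v = 0" by simp
  hence xic: "\<xi> = c *\<^sub>R \<xi>'" unfolding v_def by simp
  have "c * c = 1" using sq1 unfolding xic by (simp add: inner_simps sq2)
  hence "c = 1 \<or> c = -1" by (metis mult_cancel_left1 square_eq_iff mult.right_neutral)
  moreover have "c \<noteq> 1" using xic assms(6) by auto
  ultimately have cm: "\<xi> = - \<xi>'" using xic by simp
  have "K \<subseteq> {z. \<xi> \<bullet> z = x' \<bullet> \<xi>}"
  proof
    fix z assume "z \<in> K"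
    from K3[OF this] K2[OF this] show "z \<in> {z. \<xi> \<bullet> z = x' \<bullet> \<xi>}"
      unfolding cm by (simp add: inner_commute)
  qed
  hence "interior K \<subseteq> interior {z. \<xi> \<bullet> z = x' \<bullet> \<xi>}" by (rule interior_mono)
  hence "interior K = {}" using xi0 by simp
  thus False using assms(1) unfolding convex_body_def by simp
qed

end
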